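(* Let $f$ be a spectral density on $\Lambda$. If the prediction error tends to zero exponentially, i.e. there exists $q\in(0,1)$ with $\sigma_n(f)=O(q^n)$ as $n\to\infty$ (equivalently $\limsup_{n\to\infty}\sqrt[n]{\sigma_n(f)}<1$), then $f$ vanishes on a subset of $\Lambda$ of positive Lebesgue measure.
   Context: $\Lambda=[-\pi,\pi]$. A spectral density is $f\ge0$, $f\in L^1(\Lambda)$, positive on a set of positive measure. $\sigma_n^2(f)=\min_{c_1,\dots,c_n\in\mathbb C}\int_\Lambda|1-\sum_{k=1}^n c_ke^{-ik\lambda}|^2f(\lambda)\,d\lambda$, $\sigma_n(f)=\sqrt{\sigma_n^2(f)}$. *)

theory Defs
  imports "HOL-Analysis.Analysis" "HOL-Library.Landau_Symbols"
begin

definition Lam :: "real set" where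
  "Lam = {-pi..pi}"

definition spectral_density :: "(real \<Rightarrow> real) \<Rightarrow> bool" where
  "spectral_density f \<longleftrightarrow>
     (\<forall>x\<in>Lam. 0 \<le> f x) \<and>
     set_integrable lebesgue Lam f \<and>
     {x\<in>Lam. 0 < f x} \<in> sets lebesgue \<and>
     emeasure lebesgue {x\<in>Lam. 0 < f x} > 0"

definition sigma2 :: "(real \<Rightarrow> real) \<Rightarrow> nat \<Rightarrow> real" where
  "sigma2 f n = (INF c \<in> (UNIV :: (nat \<Rightarrow> complex) set).
     (LINT l:Lam|lebesgue.
        (cmod (1 - (\<Sum>k=1..n. c k * cis (- real k * l))))\<^sup>2 * f l))"

definition sigma :: "(real \<Rightarrow> real) \<Rightarrow> nat \<Rightarrow> real" where
  "sigma f n = sqrt (sigma2 f n)"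

end

theory Submission
  imports Defs "HOL-Complex_Analysis.Complex_Analysis" "HOL-Computational_Algebra.Fundamental_Theorem_Algebra"
begin


lemma J0:
  fixes u :: complex assumes u: "cmod u < 1"
  shows "((\<lambda>t. ln (cmod (1 + u * cis t))) has_integral 0) {0..2*pi}"
proof -
  define g where "g = (\<lambda>z. Ln (1 + u * z))"
  have nz: "1 + u * z \<notin> \<real>\<^sub>\<le>\<^sub>0" if "cmod z \<le> 1" for z
  proof -
    have "cmod (u*z) < 1" using u that by (simp add: norm_mult) (smt (verit) mult_left_le norm_ge_zero)
    hence "Re (u*z) > -1" using abs_Re_le_cmod[of "u*z"] by linarith
    hence "Re (1 + u*z) > 0" by simp
    thus ?thesis by (auto simp: complex_nonpos_Reals_iff)
  qed
  have hol: "g holomorphic_on cball 0 1" unfolding g_def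
    by (intro holomorphic_intros) (use nz in auto)
  have "((\<lambda>z. g z / (z - 0)) has_contour_integral (2 * of_real pi * \<i> * g 0)) (circlepath 0 1)"
    by (rule Cauchy_integral_circlepath_simple[OF hol]) simp
  hence "((\<lambda>z. g z / z) has_contour_integral 0) (part_circlepath 0 1 0 (2*pi))"
    by (simp add: g_def circlepath_def)
  hence "((\<lambda>t. g (0 + 1 * cis t) / (0 + 1 * cis t) * 1 * \<i> * cis t) has_integral 0) {0..2*pi}"
    by (subst (asm) has_contour_integral_part_circlepath_iff) auto
  hence "((\<lambda>t. \<i> * g (cis t)) has_integral 0) {0..2*pi}"
    by (rule has_integral_eq[rotated]) (simp add: cis_neq_zero)
  hence "((Im \<circ> (\<lambda>t. \<i> * g (cis t))) has_integral Im 0) {0..2*pi}"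
    by (rule has_integral_linear[OF _ bounded_linear_Im])
  hence "((\<lambda>t. Im (\<i> * g (cis t))) has_integral Im 0) {0..2*pi}"
    by (simp add: o_def)
  moreover have "Im (\<i> * g (cis t)) = ln (cmod (1 + u * cis t))" for t
  proof -
    have "1 + u * cis t \<noteq> 0" using nz[of "cis t"] by auto
    thus ?thesis by (simp add: g_def circlepath_def)
  qed
  ultimately show ?thesis by simp
qed

lemma J:
  fixes u :: complex assumes u: "cmod u < 1"
  shows "((\<lambda>t. ln (cmod (1 - u * cis t))) has_integral 0) {-pi..pi}"
proof -
  have "((\<lambda>t. ln (cmod (1 + u * cis (t + pi)))) has_integral 0) {0-pi..2*pi-pi}"
    by (rule has_integral_shift_real_ivl[OF J0[OF u]])
  moreover have "cis (t + pi) = - cis t" for t by (simp add: cis.ctr complex_eq_iff)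
  ultimately show ?thesis by simp
qed

lemma J':
  fixes u :: complex assumes u: "cmod u < 1"
  shows "((\<lambda>t. ln (cmod (1 - u * cis (-t)))) has_integral 0) {-pi..pi}"
proof -
  have "cmod (1 - u * cis (-t)) = cmod (1 - cnj u * cis t)" for t
  proof -
    have "cmod (1 - u * cis (-t)) = cmod (cnj (1 - u * cis (-t)))" by (rule complex_mod_cnj[symmetric])
    also have "cnj (1 - u * cis (-t)) = 1 - cnj u * cis t" by (simp add: complex_eq_iff)
    finally show ?thesis .
  qed
  thus ?thesis using J[of "cnj u"] u by simp
qed

lemma factor_int:
  fixes v :: complex assumes v: "cmod v \<noteq> 1"
  shows "((\<lambda>t. ln (cmod (1 - v * cis (-t))) - ln (max 1 (cmod v))) has_integral 0) {-pi..pi}"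
proof (cases "cmod v < 1")
  case True
  thus ?thesis using J'[OF True] by simp
next
  case False
  hence v1: "cmod v > 1" using v by simp
  hence v0: "v \<noteq> 0" by auto
  have u: "cmod (1/v) < 1" using v1 by (auto simp: norm_divide divide_simps)
  have "ln (cmod (1 - v * cis (-t))) - ln (max 1 (cmod v)) = ln (cmod (1 - (1/v) * cis t))" for t
  proof -
    have nz: "1 - (1/v) * cis t \<noteq> 0"
    proof
      assume "1 - (1/v) * cis t = 0"
      hence "cmod ((1/v) * cis t) = 1" by (metis eq_iff_diff_eq_0 norm_one)
      with u show False by (simp add: norm_mult norm_divide)
    qed
    have "1 - v * cis (-t) = (- v * cis (-t)) * (1 - (1/v) * cis t)"
      using v0 by (simp add: algebra_simps cis_mult)
    hence "cmod (1 - v * cis (-t)) = cmod v * cmod (1 - (1/v) * cis t)"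
      by (simp add: norm_mult)
    hence "ln (cmod (1 - v * cis (-t))) = ln (cmod v) + ln (cmod (1 - (1/v) * cis t))"
      using v0 nz by (simp add: ln_mult)
    thus ?thesis using v1 by simp
  qed
  thus ?thesis using J[OF u] by simp
qed

lemma factor_le:
  fixes v :: complex
  shows "ln (cmod (1 - v * cis (-t))) - ln (max 1 (cmod v)) \<le> ln 2"
proof (cases "1 - v * cis (-t) = 0")
  case True
  have "0 \<le> ln (max 1 (cmod v))" by (rule ln_ge_zero) simp
  moreover have "0 \<le> (ln 2::real)" by simp
  moreover have "ln (cmod (1 - v * cis (-t))) = 0" using True by simp
  ultimately show ?thesis by linarith
next
  case False
  have "cmod (1 - v * cis (-t)) \<le> 1 + cmod v"
    using norm_triangle_ineq4[of 1 "v * cis (-t)"] by (simp add: norm_mult)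
  also have "\<dots> \<le> 2 * max 1 (cmod v)" by simp
  finally have "ln (cmod (1 - v * cis (-t))) \<le> ln (2 * max 1 (cmod v))"
    using False by simp
  also have "\<dots> = ln 2 + ln (max 1 (cmod v))" by (simp add: ln_mult)
  finally show ?thesis by simp
qed

lemma poly_factor1:
  fixes Q :: "complex poly" assumes Q0: "poly Q 0 = 1"
  obtains v where "\<And>z. poly Q z = (\<Prod>i<degree Q. (1 - v i * z))"
    and "\<And>i. i < degree Q \<Longrightarrow> poly Q (1 / v i) = 0"
proof -
  obtain root where R: "smult (lead_coeff Q) (\<Prod>i<degree Q. [:-root i, 1:]) = Q"
    using complex_poly_decompose' by blast
  define d where "d = degree Q"
  define lc where "lc = lead_coeff Q"
  have Qz: "poly Q z = lc * (\<Prod>i<d. z - root i)" for z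
    by (subst R[symmetric]) (simp add: poly_prod lc_def d_def)
  have P0: "lc * (\<Prod>i<d. - root i) = 1" using Qz[of 0] Q0 by simp
  have rnz: "root i \<noteq> 0" if "i < d" for i
  proof
    assume "root i = 0"
    hence "(\<Prod>i<d. - root i) = 0" using that by (auto intro: prod_zero)
    with P0 show False by simp
  qed
  define v where "v i = 1 / root i" for i
  have "poly Q z = (\<Prod>i<d. (1 - v i * z))" for z
  proof -
    have "poly Q z = lc * (\<Prod>i<d. (- root i) * (1 - v i * z))"
      unfolding Qz
      by (intro arg_cong[where f="\<lambda>x. lc * x"] prod.cong refl) (simp add: v_def rnz field_simps)
    also have "\<dots> = (lc * (\<Prod>i<d. - root i)) * (\<Prod>i<d. (1 - v i * z))"
      by (simp only: prod.distrib mult.assoc)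
    finally show ?thesis using P0 by simp
  qed
  moreover have "poly Q (1 / v i) = 0" if "i < d" for i
    using that by (simp add: Qz v_def prod_zero_iff) (metis lessThan_iff right_minus_eq)
  ultimately show ?thesis using that d_def by blast
qed


lemma poly_small_measure:
  fixes Q :: "complex poly" and b :: real and n :: nat
  assumes Q0: "poly Q 0 = 1" and deg: "degree Q \<le> n" and n: "1 \<le> n"
    and nr: "\<And>z. cmod z = 1 \<Longrightarrow> poly Q z \<noteq> 0" and b: "0 < b" "b < 1"
  shows "{t\<in>Lam. cmod (poly Q (cis (-t))) < b^n} \<in> lmeasurable \<and>
         measure lebesgue {t\<in>Lam. cmod (poly Q (cis (-t))) < b^n} \<le> 2*pi*ln 2 / (ln 2 - ln b)"
proof -
  obtain v where vQ: "\<And>z. poly Q z = (\<Prod>i<degree Q. (1 - v i * z))"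
    and vr: "\<And>i. i < degree Q \<Longrightarrow> poly Q (1 / v i) = 0"
    using poly_factor1[OF Q0] by blast
  define d where "d = degree Q"
  have vn1: "cmod (v i) \<noteq> 1" if "i < d" for i
  proof
    assume "cmod (v i) = 1"
    hence "cmod (1 / v i) = 1" by (simp add: norm_divide)
    with nr vr[of i] that d_def show False by auto
  qed
  define S where "S t = (\<Sum>i<d. (ln (cmod (1 - v i * cis (-t))) - ln (max 1 (cmod (v i)))))" for t
  have Sint: "(S has_integral 0) {-pi..pi}"
  proof -
    have "((\<lambda>t. \<Sum>i<d. (ln (cmod (1 - v i * cis (-t))) - ln (max 1 (cmod (v i))))) has_integral (\<Sum>i<d. 0)) {-pi..pi}"
      using factor_int[OF vn1] by (intro has_integral_sum) auto
    thus ?thesis by (simp add: S_def[abs_def])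
  qed
  have Sle: "S t \<le> real n * ln 2" for t
  proof -
    have "S t \<le> of_nat (card {..<d}) * ln 2"
      unfolding S_def by (rule sum_bounded_above) (rule factor_le)
    also have "\<dots> \<le> real n * ln 2" using deg d_def by (simp add: mult_right_mono)
    finally show ?thesis .
  qed
  have SL: "S t \<le> ln (cmod (poly Q (cis (-t))))" for t
  proof -
    have pnz: "poly Q (cis (-t)) \<noteq> 0" using nr by simp
    hence fnz: "1 - v i * cis (-t) \<noteq> 0" if "i < d" for i
      using that by (auto simp: vQ d_def prod_zero_iff)
    have "cmod (poly Q (cis (-t))) = (\<Prod>i<d. cmod (1 - v i * cis (-t)))"
      by (simp add: vQ d_def prod_norm)
    moreover have "ln (\<Prod>i<d. cmod (1 - v i * cis (-t))) = (\<Sum>i<d. ln (cmod (1 - v i * cis (-t))))"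
      by (rule ln_prod) (use fnz in auto)
    ultimately have "ln (cmod (poly Q (cis (-t)))) = (\<Sum>i<d. ln (cmod (1 - v i * cis (-t))))"
      by simp
    moreover have "S t = (\<Sum>i<d. ln (cmod (1 - v i * cis (-t)))) - (\<Sum>i<d. ln (max 1 (cmod (v i))))"
      by (simp add: S_def sum_subtractf)
    moreover have "0 \<le> (\<Sum>i<d. ln (max 1 (cmod (v i))))"
      by (intro sum_nonneg ln_ge_zero) simp
    ultimately show ?thesis by linarith
  qed
  define E where "E = {t\<in>Lam. cmod (poly Q (cis (-t))) < b^n}"
  have Emeas: "E \<in> lmeasurable"
  proof -
    define U where "U = {t. cmod (poly Q (cis (-t))) < b^n}"
    have "open U" unfolding U_def
      by (intro open_Collect_less continuous_intros)
    hence "U \<inter> ball 0 4 \<in> lmeasurable" by (intro lmeasurable_open) auto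
    hence "(U \<inter> ball 0 4) \<inter> Lam \<in> lmeasurable"
      by (rule fmeasurable_Int_fmeasurable) (simp add: Lam_def)
    moreover have "(U \<inter> ball 0 4) \<inter> Lam = E"
      using pi_less_4 by (auto simp: U_def E_def Lam_def dist_norm)
    ultimately show ?thesis by simp
  qed
  have ptw: "S t \<le> real n * ln 2 - real n * (ln 2 - ln b) * indicator E t" if "t \<in> {-pi..pi}" for t
  proof (cases "t \<in> E")
    case True
    hence lt: "cmod (poly Q (cis (-t))) < b^n" by (simp add: E_def)
    have "poly Q (cis (-t)) \<noteq> 0" using nr by simp
    hence "ln (cmod (poly Q (cis (-t)))) < ln (b^n)" using lt b by simp
    also have "\<dots> = real n * ln b" using b by (simp add: ln_realpow)
    finally show ?thesis using SL[of t] True by (simp add: algebra_simps)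
  next
    case False thus ?thesis using Sle[of t] by simp
  qed
  have ind: "(indicator E has_integral measure lebesgue E) {-pi..pi}"
  proof -
    have "(indicat_real E has_integral measure lebesgue E) UNIV"
      using lmeasurable_iff_indicator_has_integral Emeas by blast
    moreover have "(\<lambda>x. if x \<in> {-pi..pi} then indicat_real E x else 0) = indicator E"
      by (auto simp: E_def Lam_def indicator_def)
    ultimately show ?thesis using has_integral_restrict_UNIV[of "{-pi..pi}" "indicat_real E"] by simp
  qed
  have "((\<lambda>t. real n * ln 2 - real n * (ln 2 - ln b) * indicator E t) has_integral
         (Henstock_Kurzweil_Integration.content {-pi..pi} *\<^sub>R (real n * ln 2) - real n * (ln 2 - ln b) * measure lebesgue E)) {-pi..pi}"
    by (intro has_integral_diff has_integral_const_real has_integral_mult_right ind)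
  note I = this
  have "0 \<le> 2 * pi * (real n * ln 2) - real n * (ln 2 - ln b) * measure lebesgue E"
    using has_integral_le[OF Sint I ptw] by simp
  moreover have "ln b < 0" using b by simp
  moreover have "(0::real) < ln 2" by simp
  ultimately have "real n * ((ln 2 - ln b) * measure lebesgue E) \<le> real n * (2 * pi * ln 2)"
    by (simp add: algebra_simps)
  hence "(ln 2 - ln b) * measure lebesgue E \<le> 2 * pi * ln 2" using n by simp
  moreover have pos: "0 < ln 2 - ln b" using \<open>ln b < 0\<close> \<open>0 < ln 2\<close> by linarith
  ultimately have "measure lebesgue E \<le> 2 * pi * ln 2 / (ln 2 - ln b)"
    by (subst pos_le_divide_eq[OF pos]) (simp add: mult.commute)
  thus ?thesis using Emeas E_def by simp
qed



lemma exists_avoid: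
  fixes F :: "real set" assumes "finite F" "a < b"
  obtains r where "a < r" "r < b" "r \<notin> F"
proof -
  have "infinite ({a<..<b} - F)" using assms infinite_Ioo by (metis Diff_infinite_finite)
  hence "{a<..<b} - F \<noteq> {}" by (metis finite.emptyI)
  then obtain r where "r \<in> {a<..<b} - F" by blast
  thus ?thesis using that by auto
qed

lemma perturb:
  fixes c :: "nat \<Rightarrow> complex" and n :: nat and \<delta> :: real
  assumes n: "1 \<le> n" and d: "0 < \<delta>"
  obtains Q where "poly Q 0 = 1" "degree Q \<le> n" "\<And>z. cmod z = 1 \<Longrightarrow> poly Q z \<noteq> 0"
    "\<And>t. cmod (poly Q (cis (-t)) - (1 - (\<Sum>k=1..n. c k * cis (- real k * t)))) \<le> \<delta>"
proof -
  define P where "P = 1 - (\<Sum>k=1..n. monom (c k) k)"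
  have Pz: "poly P z = 1 - (\<Sum>k=1..n. c k * z ^ k)" for z
    by (simp add: P_def poly_sum poly_monom)
  have P0: "poly P 0 = 1" by (simp add: Pz)
  hence Pnz: "P \<noteq> 0" by auto
  have degP: "degree P \<le> n"
    unfolding P_def
    by (rule order.trans[OF degree_diff_le_max]) (auto intro!: degree_sum_le order.trans[OF degree_monom_le])
  define bad where "bad = cmod ` {x. poly P x = 0}"
  have fb: "finite bad" unfolding bad_def using poly_roots_finite[OF Pnz] by simp
  define M where "M = (\<Sum>k=1..n. cmod (c k))"
  have M0: "0 \<le> M" unfolding M_def by (simp add: sum_nonneg)
  obtain r where r1: "max 0 (1 - \<delta> / (n * (M + 1))) < r" and r2: "r < 1" and r3: "r \<notin> bad"
  proof -
    have "0 < \<delta> / (n * (M + 1))" using d n M0 by (intro divide_pos_pos mult_pos_pos) auto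
    hence "max 0 (1 - \<delta> / (n * (M + 1))) < 1" by simp
    thus ?thesis using exists_avoid[OF fb] that by blast
  qed
  have r0: "0 < r" using r1 by simp
  have rd: "real n * M * (1 - r) \<le> \<delta>"
  proof -
    have "1 - r < \<delta> / (n * (M + 1))" using r1 by simp
    moreover have D: "0 < real n * (M + 1)" using n M0 by auto
    ultimately have "(1 - r) * (real n * (M + 1)) < \<delta>" using pos_less_divide_eq[OF D] by blast
    hence "real n * (M + 1) * (1 - r) \<le> \<delta>" by (simp add: mult.commute)
    moreover have "real n * M * (1 - r) \<le> real n * (M + 1) * (1 - r)"
      using r2 M0 by (intro mult_right_mono mult_left_mono) auto
    ultimately show ?thesis by linarith
  qed
  define Q where "Q = pcompose P [:0, complex_of_real r:]"
  have Qz: "poly Q z = poly P (of_real r * z)" for z by (simp add: Q_def poly_pcompose mult.commute)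
  have "poly Q 0 = 1" using P0 by (simp add: Qz)
  moreover have "degree Q \<le> n"
  proof -
    have "degree Q \<le> degree P * degree [:0, complex_of_real r:]"
      unfolding Q_def by (rule degree_pcompose_le)
    also have "\<dots> \<le> degree P * 1" by (intro mult_left_mono) auto
    finally show ?thesis using degP by simp
  qed
  moreover have "poly Q z \<noteq> 0" if "cmod z = 1" for z
  proof
    assume "poly Q z = 0"
    hence "of_real r * z \<in> {x. poly P x = 0}" by (simp add: Qz)
    hence "cmod (of_real r * z) \<in> bad" unfolding bad_def by blast
    moreover have "cmod (of_real r * z) = r" using that r0 by (simp add: norm_mult)
    ultimately show False using r3 by simp
  qed
  moreover have "cmod (poly Q (cis (-t)) - (1 - (\<Sum>k=1..n. c k * cis (- real k * t)))) \<le> \<delta>" for t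
  proof -
    define w where "w = cis (-t)"
    have wk: "cis (- real k * t) = w ^ k" for k by (simp add: w_def Complex.DeMoivre)
    have "poly Q (cis (-t)) - (1 - (\<Sum>k=1..n. c k * cis (- real k * t)))
          = (\<Sum>k=1..n. c k * (w ^ k - (of_real r * w) ^ k))"
      unfolding wk by (simp add: Qz Pz w_def[symmetric] sum_subtractf[symmetric] algebra_simps)
    also have "cmod \<dots> \<le> (\<Sum>k=1..n. cmod (c k) * (real n * (1 - r)))"
    proof (rule order.trans[OF norm_sum sum_mono])
      fix k assume k: "k \<in> {1..n}"
      have "cmod (w ^ k - (of_real r * w) ^ k) = cmod (w ^ k) * cmod (1 - of_real (r ^ k))"
        by (simp add: power_mult_distrib norm_mult[symmetric] algebra_simps)
      also have "\<dots> = 1 - r ^ k"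
      proof -
        have e: "1 - complex_of_real (r ^ k) = complex_of_real (1 - r ^ k)" by simp
        have "r ^ k \<le> 1" using r0 r2 by (simp add: power_le_one)
        thus ?thesis unfolding e norm_of_real by (simp add: w_def norm_power)
      qed
      also have "\<dots> \<le> real k * (1 - r)"
        using Bernoulli_inequality[of "r - 1" k] r0 by (simp add: algebra_simps)
      also have "\<dots> \<le> real n * (1 - r)" using k r2 by (intro mult_right_mono) auto
      finally show "cmod (c k * (w ^ k - (of_real r * w) ^ k)) \<le> cmod (c k) * (real n * (1 - r))"
        by (simp add: norm_mult mult_left_mono)
    qed
    also have "\<dots> = real n * M * (1 - r)" unfolding M_def sum_distrib_right[symmetric] by (simp add: algebra_simps)
    also have "\<dots> \<le> \<delta>" by (rule rd)
    finally show ?thesis .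
  qed
  ultimately show ?thesis using that by blast
qed




lemma cont_meas:
  fixes g :: "real \<Rightarrow> real"
  shows "continuous_on UNIV g \<Longrightarrow> g \<in> borel_measurable lebesgue"
  using continuous_imp_measurable_on_sets_lebesgue[of UNIV g] by (simp add: lebesgue_on_UNIV_eq)

lemma si_bound:
  fixes g f :: "real \<Rightarrow> real"
  assumes fi: "set_integrable lebesgue Lam f" and gm: "g \<in> borel_measurable lebesgue"
    and gb: "\<And>x. \<bar>g x\<bar> \<le> B"
  shows "set_integrable lebesgue Lam (\<lambda>x. g x * f x)"
proof -
  have fi': "integrable lebesgue (\<lambda>x. indicator Lam x *\<^sub>R f x)"
    using fi by (simp add: set_integrable_def)
  have fm: "(\<lambda>x. indicator Lam x *\<^sub>R f x) \<in> borel_measurable lebesgue"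
    using fi' by (rule borel_measurable_integrable)
  have c1: "integrable lebesgue (\<lambda>x. B * (indicator Lam x *\<^sub>R f x))"
    using fi' by (rule integrable_mult_right)
  have c2: "(\<lambda>x. indicator Lam x *\<^sub>R (g x * f x)) \<in> borel_measurable lebesgue"
  proof -
    have "(\<lambda>x. g x * (indicator Lam x *\<^sub>R f x)) \<in> borel_measurable lebesgue"
      using gm fm by (rule borel_measurable_times)
    moreover have "(\<lambda>x. g x * (indicator Lam x *\<^sub>R f x)) = (\<lambda>x. indicator Lam x *\<^sub>R (g x * f x))"
      by (auto simp: indicator_def)
    ultimately show ?thesis by simp
  qed
  have c3: "AE x in lebesgue. norm (indicator Lam x *\<^sub>R (g x * f x)) \<le> norm (B * (indicator Lam x *\<^sub>R f x))"
  proof (rule AE_I2)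
    fix x
    have "\<bar>g x\<bar> * \<bar>f x\<bar> \<le> \<bar>B\<bar> * \<bar>f x\<bar>" using gb[of x] by (intro mult_right_mono) auto
    thus "norm (indicator Lam x *\<^sub>R (g x * f x)) \<le> norm (B * (indicator Lam x *\<^sub>R f x))"
      by (auto simp: indicator_def abs_mult)
  qed
  have "integrable lebesgue (\<lambda>x. indicator Lam x *\<^sub>R (g x * f x))"
    by (rule Bochner_Integration.integrable_bound[OF c1 c2 c3])
  thus ?thesis by (simp add: set_integrable_def)
qed


lemma Lam_set_meas:
  fixes f :: "real \<Rightarrow> real"
  assumes fi: "set_integrable lebesgue Lam f" and T: "T \<in> sets borel"
  shows "{x\<in>Lam. f x \<in> T} \<in> sets lebesgue"
proof -
  have g: "(\<lambda>x. indicator Lam x *\<^sub>R f x) \<in> borel_measurable lebesgue"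
    using fi unfolding set_integrable_def by (rule borel_measurable_integrable)
  have "(\<lambda>x. indicator Lam x *\<^sub>R f x) -` T \<inter> space lebesgue \<in> sets lebesgue"
    using measurable_sets[OF g T] .
  moreover have "{x\<in>Lam. f x \<in> T} = Lam \<inter> ((\<lambda>x. indicator Lam x *\<^sub>R f x) -` T \<inter> space lebesgue)"
    by (auto simp: indicator_def)
  moreover have "Lam \<in> sets lebesgue" by (simp add: Lam_def)
  ultimately show ?thesis by auto
qed

lemma bounded_Lam: "bounded Lam" by (simp add: Lam_def)

lemma Lam_sub_lmeas: "S \<subseteq> Lam \<Longrightarrow> S \<in> sets lebesgue \<Longrightarrow> S \<in> lmeasurable"
  by (rule bounded_set_imp_lmeasurable) (auto intro: bounded_subset[OF bounded_Lam])

lemma key: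
  fixes f :: "real \<Rightarrow> real" and n :: nat and e C q b :: real
  assumes fpos: "\<And>x. x\<in>Lam \<Longrightarrow> 0 \<le> f x" and fi: "set_integrable lebesgue Lam f"
    and n: "1 \<le> n" and e: "0 < e" and q0: "0 < q" and b: "0 < b" "b < 1"
    and s2: "sigma2 f n \<le> (C*q^n)^2"
  shows "measure lebesgue {x\<in>Lam. e \<le> f x} \<le> 2*pi*ln 2/(ln 2 - ln b) +
     (2*(C*q^n)^2 + 2*(q^n)^2 + 2*(q^n)^2 * (LINT x:Lam|lebesgue. f x)) / (e * (b^n)^2)"
proof -
  define F where "F = (LINT x:Lam|lebesgue. f x)"
  define K where "K = 2*(C*q^n)^2 + 2*(q^n)^2 + 2*(q^n)^2 * F"
  define I where "I c = (LINT l:Lam|lebesgue. (cmod (1 - (\<Sum>k=1..n. c k * cis (- real k * l))))\<^sup>2 * f l)"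
    for c :: "nat \<Rightarrow> complex"
  have "sigma2 f n = Inf (range I)" by (simp add: sigma2_def I_def)
  moreover have "0 < (q^n)^2" using q0 by simp
  ultimately have "Inf (range I) < (C*q^n)^2 + (q^n)^2" using s2 by linarith
  then obtain c where Ic: "I c < (C*q^n)^2 + (q^n)^2" using cInf_lessD[of "range I"] by blast
  have qn: "0 < q^n" using q0 by simp
  obtain Q where Q0: "poly Q 0 = 1" and Qd: "degree Q \<le> n" and Qr: "\<And>z. cmod z = 1 \<Longrightarrow> poly Q z \<noteq> 0"
    and Qc: "\<And>t. cmod (poly Q (cis (-t)) - (1 - (\<Sum>k=1..n. c k * cis (- real k * t)))) \<le> q^n"
    using perturb[OF n qn, of c] by blast
  define p where "p t = cmod (1 - (\<Sum>k=1..n. c k * cis (- real k * t)))" for t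
  define h where "h t = cmod (poly Q (cis (-t)))" for t
  define Bp where "Bp = 1 + (\<Sum>k=1..n. cmod (c k))"
  have p0: "0 \<le> p t" for t by (simp add: p_def)
  have h0: "0 \<le> h t" for t by (simp add: h_def)
  have pB: "p t \<le> Bp" for t
  proof -
    have "p t \<le> 1 + cmod (\<Sum>k=1..n. c k * cis (- real k * t))"
      unfolding p_def using norm_triangle_ineq4[of 1 "\<Sum>k=1..n. c k * cis (- real k * t)"] by simp
    moreover have "cmod (\<Sum>k=1..n. c k * cis (- real k * t)) \<le> (\<Sum>k=1..n. cmod (c k))"
      by (rule order.trans[OF norm_sum]) (simp add: norm_mult)
    ultimately show ?thesis by (simp add: Bp_def)
  qed
  have hp: "h t \<le> p t + q^n" for t
    using norm_triangle_sub[of "poly Q (cis (-t))" "1 - (\<Sum>k=1..n. c k * cis (- real k * t))"] Qc[of t]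
    unfolding h_def p_def by linarith
  have h2: "(h t)^2 \<le> 2*(p t)^2 + 2*(q^n)^2" for t
  proof -
    have "(h t)^2 \<le> (p t + q^n)^2" using hp[of t] h0[of t] by (intro power_mono) auto
    moreover have d: "0 \<le> (p t - q^n)^2" by simp
    ultimately show ?thesis unfolding power2_sum power2_diff by linarith
  qed
  have pc: "continuous_on UNIV p" unfolding p_def by (intro continuous_intros)
  have hc: "continuous_on UNIV h" unfolding h_def by (intro continuous_intros)
  have ip: "set_integrable lebesgue Lam (\<lambda>t. (p t)^2 * f t)"
  proof (rule si_bound[OF fi])
    show "(\<lambda>t. (p t)^2) \<in> borel_measurable lebesgue" by (rule cont_meas) (intro continuous_intros pc)
    show "\<bar>(p t)^2\<bar> \<le> Bp^2" for t using pB[of t] p0[of t] by (simp add: power_mono)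
  qed
  have ih: "set_integrable lebesgue Lam (\<lambda>t. (h t)^2 * f t)"
  proof (rule si_bound[OF fi])
    show "(\<lambda>t. (h t)^2) \<in> borel_measurable lebesgue" by (rule cont_meas) (intro continuous_intros hc)
    show "\<bar>(h t)^2\<bar> \<le> (Bp + q^n)^2" for t
      using pB[of t] hp[of t] h0[of t] by (simp add: power_mono)
  qed
  have i2: "set_integrable lebesgue Lam (\<lambda>t. 2 * ((p t)^2 * f t))" using ip by simp
  have i3: "set_integrable lebesgue Lam (\<lambda>t. 2*(q^n)^2 * f t)" using fi by simp
  have hint: "(LINT t:Lam|lebesgue. (h t)^2 * f t) \<le> K"
  proof -
    have "(LINT t:Lam|lebesgue. (h t)^2 * f t) \<le> (LINT t:Lam|lebesgue. 2 * ((p t)^2 * f t) + 2*(q^n)^2 * f t)"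
    proof (rule set_integral_mono[OF ih set_integral_add(1)[OF i2 i3]])
      fix t assume "t \<in> Lam"
      hence "(h t)^2 * f t \<le> (2*(p t)^2 + 2*(q^n)^2) * f t"
        using fpos by (intro mult_right_mono h2) auto
      thus "(h t)^2 * f t \<le> 2 * ((p t)^2 * f t) + 2*(q^n)^2 * f t" by (simp add: algebra_simps)
    qed
    also have "\<dots> = 2 * I c + 2*(q^n)^2 * F"
      using set_integral_add(2)[OF i2 i3] by (simp add: I_def p_def F_def)
    also have "\<dots> \<le> K" using Ic unfolding K_def by simp
    finally show ?thesis .
  qed
  define A where "A = {x\<in>Lam. e \<le> f x}"
  define G where "G = {x\<in>A. b^n \<le> h x}"
  define E where "E = {t\<in>Lam. cmod (poly Q (cis (-t))) < b^n}"
  have EM: "E \<in> lmeasurable" and Eb: "measure lebesgue E \<le> 2*pi*ln 2/(ln 2 - ln b)"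
    using poly_small_measure[OF Q0 Qd n Qr b] unfolding E_def by auto
  have As: "A \<in> sets lebesgue"
  proof -
    have "{x\<in>Lam. f x \<in> {e..}} \<in> sets lebesgue" by (rule Lam_set_meas[OF fi]) simp
    thus ?thesis unfolding A_def by simp
  qed
  have Gs: "G \<in> sets lebesgue"
  proof -
    have hm: "h \<in> borel_measurable lebesgue" by (rule cont_meas[OF hc])
    have "h -` {b^n..} \<inter> space lebesgue \<in> sets lebesgue" by (rule measurable_sets[OF hm]) simp
    moreover have "G = A \<inter> (h -` {b^n..} \<inter> space lebesgue)" by (auto simp: G_def)
    ultimately show ?thesis using As by auto
  qed
  have GM: "G \<in> lmeasurable" by (rule Lam_sub_lmeas) (use Gs in \<open>auto simp: G_def A_def\<close>)
  have cheb: "e * (b^n)^2 * measure lebesgue G \<le> K"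
  proof -
    have "(LINT x|lebesgue. e * (b^n)^2 * indicator G x) \<le> (LINT x|lebesgue. indicator Lam x *\<^sub>R ((h x)^2 * f x))"
    proof (rule Bochner_Integration.integral_mono)
      show "integrable lebesgue (\<lambda>x. e * (b^n)^2 * indicat_real G x)"
        using GM by (intro integrable_mult_right integrable_real_indicator) (auto simp: fmeasurable_def)
      show "integrable lebesgue (\<lambda>x. indicator Lam x *\<^sub>R ((h x)^2 * f x))"
        using ih by (simp add: set_integrable_def)
      fix x
      show "e * (b^n)^2 * indicator G x \<le> indicator Lam x *\<^sub>R ((h x)^2 * f x)"
      proof (cases "x \<in> G")
        case True
        hence x: "x \<in> Lam" "e \<le> f x" "b^n \<le> h x" by (auto simp: G_def A_def)
        have "(b^n)^2 \<le> (h x)^2" using x(3) b by (intro power_mono) auto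
        hence "(b^n)^2 * e \<le> (h x)^2 * f x" using x(2) e by (intro mult_mono) auto
        thus ?thesis using True x by (simp add: mult.commute)
      next
        case False
        thus ?thesis using fpos[of x] by (auto simp: indicator_def)
      qed
    qed
    moreover have "(LINT x|lebesgue. e * (b^n)^2 * indicator G x) = e * (b^n)^2 * measure lebesgue G"
      by (simp add: integral_indicator)
    moreover have "(LINT x|lebesgue. indicator Lam x *\<^sub>R ((h x)^2 * f x)) = (LINT t:Lam|lebesgue. (h t)^2 * f t)"
      by (simp add: set_lebesgue_integral_def)
    ultimately show ?thesis using hint by linarith
  qed
  have Gb: "measure lebesgue G \<le> K / (e * (b^n)^2)"
    using cheb e b by (simp add: pos_le_divide_eq mult.commute)
  have sub: "A \<subseteq> G \<union> E" by (auto simp: G_def E_def h_def A_def)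
  have GE: "G \<union> E \<in> lmeasurable"
    by (rule Lam_sub_lmeas) (use Gs EM in \<open>auto simp: G_def A_def E_def\<close>)
  have "measure lebesgue A \<le> measure lebesgue (G \<union> E)"
    by (rule measure_mono_fmeasurable[OF sub As GE])
  also have "\<dots> \<le> measure lebesgue G + measure lebesgue E"
    using Gs EM by (intro measure_Un_le) auto
  finally show ?thesis using Gb Eb unfolding A_def K_def F_def by linarith
qed


theorem mainTheorem3:
  fixes f :: "real \<Rightarrow> real"
  assumes "spectral_density f"
    and "\<exists>q. 0 < q \<and> q < 1 \<and> (\<lambda>n. sigma f n) \<in> O(\<lambda>n. q ^ n)"
  shows "{x\<in>Lam. f x = 0} \<in> sets lebesgue \<and> emeasure lebesgue {x\<in>Lam. f x = 0} > 0"
proof -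
  from assms(1) have fpos: "\<And>x. x\<in>Lam \<Longrightarrow> 0 \<le> f x" and fi: "set_integrable lebesgue Lam f"
    unfolding spectral_density_def by auto
  from assms(2) obtain q where q0: "0 < q" and q1: "q < 1" and O: "(\<lambda>n. sigma f n) \<in> O(\<lambda>n. q ^ n)"
    by blast
  from O obtain C where "C > 0" and ev: "eventually (\<lambda>n. norm (sigma f n) \<le> C * norm (q ^ n)) at_top"
    by (elim landau_o.bigE)
  then obtain N0 where N0: "\<And>n. n \<ge> N0 \<Longrightarrow> norm (sigma f n) \<le> C * norm (q ^ n)"
    by (auto simp: eventually_at_top_linorder)
  have s2: "sigma2 f n \<le> (C*q^n)^2" if "n \<ge> N0" for n
  proof (cases "0 \<le> sigma2 f n")
    case True
    have "sigma2 f n = (sigma f n)^2" using True by (simp add: sigma_def)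
    also have "\<dots> = \<bar>sigma f n\<bar>^2" by simp
    also have "\<dots> \<le> (C*q^n)^2"
    proof (rule power_mono)
      show "\<bar>sigma f n\<bar> \<le> C*q^n" using N0[OF that] q0 by (simp add: power_abs)
    qed simp
    finally show ?thesis .
  next
    case False
    moreover have "0 \<le> (C*q^n)^2" by simp
    ultimately show ?thesis by linarith
  qed
  define b where "b = (1+q)/2"
  have b0: "0 < b" "b < 1" "q < b" using q0 q1 by (auto simp: b_def)
  define \<mu> where "\<mu> = 2*pi*ln 2/(ln 2 - ln b)"
  define F where "F = (LINT x:Lam|lebesgue. f x)"
  have Ameas: "measure lebesgue {x\<in>Lam. e \<le> f x} \<le> \<mu>" if e: "0 < e" for e
  proof -
    define X where "X n = \<mu> + (2*(C*q^n)^2 + 2*(q^n)^2 + 2*(q^n)^2 * F) / (e * (b^n)^2)" for n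
    have X_eq: "X = (\<lambda>n. \<mu> + ((2*C^2 + 2 + 2*F)/e) * ((q/b)^n)^2)"
    proof
      fix n
      show "X n = \<mu> + ((2*C^2 + 2 + 2*F)/e) * ((q/b)^n)^2"
        using b0 e by (simp add: X_def power_mult_distrib power_divide field_simps)
    qed
    have L: "(\<lambda>n. (q/b)^n) \<longlonglongrightarrow> 0" by (rule LIMSEQ_realpow_zero) (use q0 b0 in auto)
    have "(\<lambda>n. \<mu> + ((2*C^2 + 2 + 2*F)/e) * ((q/b)^n)^2) \<longlonglongrightarrow> \<mu> + ((2*C^2 + 2 + 2*F)/e) * 0^2"
      by (intro tendsto_intros L)
    hence XL: "X \<longlonglongrightarrow> \<mu>" by (simp add: X_eq)
    have "\<forall>n\<ge>max N0 1. measure lebesgue {x\<in>Lam. e \<le> f x} \<le> X n"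
    proof (intro allI impI)
      fix n assume "n \<ge> max N0 1"
      hence n1: "1 \<le> n" and nN: "N0 \<le> n" by auto
      show "measure lebesgue {x\<in>Lam. e \<le> f x} \<le> X n"
        using key[OF fpos fi n1 e q0 b0(1) b0(2) s2[OF nN]] unfolding X_def \<mu>_def F_def by simp
    qed
    hence "\<exists>N. \<forall>n\<ge>N. measure lebesgue {x\<in>Lam. e \<le> f x} \<le> X n" by blast
    thus ?thesis by (rule LIMSEQ_le_const[OF XL])
  qed
  define Aseq where "Aseq m = {x\<in>Lam. 1/(real m + 1) \<le> f x}" for m :: nat
  define Pos where "Pos = {x\<in>Lam. 0 < f x}"
  define Z where "Z = {x\<in>Lam. f x = 0}"
  have Asets: "Aseq m \<in> sets lebesgue" for m
    using Lam_set_meas[OF fi, of "{1/(real m+1)..}"] by (simp add: Aseq_def)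
  have Pos_s: "Pos \<in> sets lebesgue" using Lam_set_meas[OF fi, of "{0<..}"] by (simp add: Pos_def)
  have Z_s: "Z \<in> sets lebesgue" using Lam_set_meas[OF fi, of "{0}"] by (simp add: Z_def)
  have inc: "incseq Aseq"
  proof (rule incseq_SucI)
    fix m
    have "1/(real (Suc m) + 1) \<le> 1/(real m + 1)" by (intro divide_left_mono) auto
    thus "Aseq m \<subseteq> Aseq (Suc m)" by (auto simp: Aseq_def)
  qed
  have UN: "(\<Union>m. Aseq m) = Pos"
  proof
    show "(\<Union>m. Aseq m) \<subseteq> Pos"
    proof
      fix x assume "x \<in> (\<Union>m. Aseq m)"
      then obtain m where x: "x \<in> Lam" "1/(real m+1) \<le> f x" by (auto simp: Aseq_def)
      moreover have "0 < 1/(real m+1)" by simp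
      ultimately have "0 < f x" by linarith
      thus "x \<in> Pos" using x unfolding Pos_def by simp
    qed
    show "Pos \<subseteq> (\<Union>m. Aseq m)"
    proof
      fix x assume "x \<in> Pos"
      hence x: "x \<in> Lam" "0 < f x" by (auto simp: Pos_def)
      obtain m where "inverse (real (Suc m)) < f x" using reals_Archimedean[OF x(2)] by blast
      hence "1/(real m+1) \<le> f x" by (simp add: inverse_eq_divide add.commute)
      thus "x \<in> (\<Union>m. Aseq m)" using x by (auto simp: Aseq_def)
    qed
  qed
  have PosM: "Pos \<in> lmeasurable" by (rule Lam_sub_lmeas) (use Pos_s in \<open>auto simp: Pos_def\<close>)
  have "(\<lambda>m. measure lebesgue (Aseq m)) \<longlonglongrightarrow> measure lebesgue (\<Union>(range Aseq))"
    by (rule Lim_measure_incseq) (use Asets inc UN PosM in \<open>auto dest: fmeasurableD2\<close>)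
  hence PosL: "(\<lambda>m. measure lebesgue (Aseq m)) \<longlonglongrightarrow> measure lebesgue Pos" using UN by simp
  have Posb: "measure lebesgue Pos \<le> \<mu>"
    by (rule LIMSEQ_le_const2[OF PosL]) (auto simp: Aseq_def intro!: Ameas)
  have \<mu>2: "\<mu> < 2*pi"
  proof -
    have lb: "ln b < 0" using b0 by simp
    have l2: "0 < ln (2::real)" by simp
    have "2*pi*ln 2 < 2*pi*(ln 2 - ln b)" using lb by (intro mult_strict_left_mono) auto
    moreover have "0 < ln 2 - ln b" using lb l2 by linarith
    ultimately show ?thesis unfolding \<mu>_def by (simp add: pos_divide_less_eq)
  qed
  have ZM: "Z \<in> lmeasurable" by (rule Lam_sub_lmeas) (use Z_s in \<open>auto simp: Z_def\<close>)
  have LamU: "Lam = Z \<union> Pos" using fpos by (force simp: Z_def Pos_def)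
  have "measure lebesgue Lam \<le> measure lebesgue Z + measure lebesgue Pos"
    using measure_Un_le[OF Z_s Pos_s] LamU by simp
  moreover have "measure lebesgue Lam = 2*pi" by (simp add: Lam_def lmeasure_integral)
  ultimately have "0 < measure lebesgue Z" using Posb \<mu>2 by linarith
  hence "0 < emeasure lebesgue Z" using emeasure_eq_measure2[OF ZM] by simp
  thus ?thesis using Z_s unfolding Z_def by simp
qed


end
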